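(* Let $n=2^r$, $m\ge1$, and consider the variables $P_{i,j}$ ($i\in[m]$, $j\in[r]$) of the binary $\mathrm{PHP}^m_n$. Let $\mathcal R'$ be the random restriction which, for each pigeon $i$ independently, selects a bit position $j\in[r]$ uniformly at random and sets $P_{i,j}$ to $0$ or $1$ with probability $\frac12$ each. Then a term $T$ that mentions $n'$ pigeons does not evaluate to zero under $\mathcal R'$ (i.e. no literal of $T$ is set false) with probability at most $e^{-n'/(2\log_2 n)}$.
   Context: In the binary Pigeonhole Principle, $P_{i,j}$ is the $j$th bit of the binary representation of the hole of pigeon $i$. A term is a conjunction of literals over the variables $P_{i,j}$; it mentions pigeon $i$ if it contains a literal of some variable $P_{i,j}$. *)

theory Defs
  imports "HOL-Probability.Product_PMF"
begin

text \<open>A variable of binary PHP is a pair (i, j): P_{i,j}, the j-th bit of the hole of pigeon i.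
  A literal is a pair (v, b) asserting that variable v has value b.
  A term is a set of literals (their conjunction).\<close>

type_synonym bphp_var = "nat \<times> nat"
type_synonym bphp_lit = "bphp_var \<times> bool"

definition pigeons_mentioned :: "bphp_lit set \<Rightarrow> nat set" where
  "pigeons_mentioned T = {i. \<exists>j b. ((i, j), b) \<in> T}"

text \<open>The restriction R': for each pigeon i, a pair (j, c): bit position j is set to c.
  Pigeons outside [m] are mapped to the default value and ignored.\<close>
definition restr_R' :: "nat \<Rightarrow> nat \<Rightarrow> (nat \<Rightarrow> nat \<times> bool) pmf" where
  "restr_R' m r = Pi_pmf {0..<m} (0, False) (\<lambda>_. pmf_of_set ({0..<r} \<times> UNIV))"

definition lit_falsified :: "(nat \<Rightarrow> nat \<times> bool) \<Rightarrow> bphp_lit \<Rightarrow> bool" where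
  "lit_falsified \<rho> l = (case l of ((i, j), b) \<Rightarrow> fst (\<rho> i) = j \<and> snd (\<rho> i) \<noteq> b)"

definition term_not_zero :: "(nat \<Rightarrow> nat \<times> bool) \<Rightarrow> bphp_lit set \<Rightarrow> bool" where
  "term_not_zero \<rho> T = (\<forall>l\<in>T. \<not> lit_falsified \<rho> l)"

end

theory Submission
  imports Defs
begin

lemma card_one_removed:
  assumes "j < (r::nat)"
  shows "card (({0..<r} \<times> (UNIV::bool set)) \<inter> (UNIV - {(j, c)})) = 2 * r - 1"
proof -
  have "({0..<r} \<times> (UNIV::bool set)) \<inter> (UNIV - {(j, c)}) = ({0..<r} \<times> UNIV) - {(j,c)}" by blast
  moreover have "card ({0..<r} \<times> (UNIV::bool set)) = 2 * r" by (simp add: card_cartesian_product)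
  ultimately show ?thesis using assms by (simp add: card_Diff_singleton)
qed

theorem lemma5:
  fixes n r m :: nat and T :: "bphp_lit set"
  assumes "n = 2 ^ r" and "r \<ge> 1" and "m \<ge> 1"
    and "\<forall>((i, j), b) \<in> T. i < m \<and> j < r"
  shows "measure_pmf.prob (restr_R' m r) {\<rho>. term_not_zero \<rho> T}
           \<le> exp (- real (card (pigeons_mentioned T)) / (2 * log 2 (real n)))"
proof -
  define S where "S = pigeons_mentioned T"
  define jb where "jb i = (SOME p. ((i, fst p), snd p) \<in> T)" for i
  have jbT: "((i, fst (jb i)), snd (jb i)) \<in> T" if "i \<in> S" for i
  proof -
    from that obtain j b where "((i,j),b) \<in> T" unfolding S_def pigeons_mentioned_def by blast
    then have "\<exists>p. ((i, fst p), snd p) \<in> T" by (intro exI[of _ "(j,b)"]) simp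
    then show ?thesis unfolding jb_def by (rule someI_ex)
  qed
  have Ssub: "S \<subseteq> {0..<m}" using assms(4) unfolding S_def pigeons_mentioned_def by fastforce
  have jr: "fst (jb i) < r" if "i \<in> S" for i using assms(4) jbT[OF that] by fastforce
  define B where "B i = (if i \<in> S then UNIV - {(fst (jb i), \<not> snd (jb i))} else UNIV)" for i
  define x where "x = 1 / (2 * real r)"
  have sub: "{\<rho>. term_not_zero \<rho> T} \<subseteq> Pi {0..<m} B"
  proof
    fix \<rho> assume "\<rho> \<in> {\<rho>. term_not_zero \<rho> T}"
    then have h: "\<And>l. l \<in> T \<Longrightarrow> \<not> lit_falsified \<rho> l" unfolding term_not_zero_def by blast
    show "\<rho> \<in> Pi {0..<m} B"
    proof
      fix i assume "i \<in> {0..<m}"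
      show "\<rho> i \<in> B i"
      proof (cases "i \<in> S")
        case True
        from h[OF jbT[OF True]] have "\<rho> i \<noteq> (fst (jb i), \<not> snd (jb i))"
          unfolding lit_falsified_def by auto
        then show ?thesis using True unfolding B_def by simp
      qed (simp add: B_def)
    qed
  qed
  have "measure_pmf.prob (restr_R' m r) {\<rho>. term_not_zero \<rho> T}
      \<le> measure_pmf.prob (restr_R' m r) (Pi {0..<m} B)"
    by (rule measure_pmf.finite_measure_mono[OF sub]) simp
  also have "\<dots> = (\<Prod>i\<in>{0..<m}. measure_pmf.prob (pmf_of_set ({0..<r} \<times> UNIV)) (B i))"
    unfolding restr_R'_def by (rule measure_Pi_pmf_Pi) simp
  also have "\<dots> = (\<Prod>i\<in>{0..<m}. if i \<in> S then 1 - x else 1)"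
  proof (rule prod.cong[OF refl])
    fix i assume "i \<in> {0..<m}"
    have ne: "{0..<r} \<times> (UNIV::bool set) \<noteq> {}" using assms(2) by auto
    have cr: "card ({0..<r} \<times> (UNIV::bool set)) = 2 * r" by (simp add: card_cartesian_product)
    show "measure_pmf.prob (pmf_of_set ({0..<r} \<times> UNIV)) (B i) = (if i \<in> S then 1 - x else 1)"
    proof (cases "i \<in> S")
      case True
      have "measure_pmf.prob (pmf_of_set ({0..<r} \<times> UNIV)) (B i)
          = real (2 * r - 1) / real (2 * r)"
        using True ne cr card_one_removed[OF jr[OF True]]
        by (simp add: measure_pmf_of_set B_def)
      also have "\<dots> = 1 - x" using assms(2) unfolding x_def by (simp add: of_nat_diff field_simps)
      finally show ?thesis using True by simp
    next
      case False
      then show ?thesis using ne by (simp add: B_def measure_pmf_of_set cr)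
    qed
  qed
  also have "\<dots> = (1 - x) ^ card S"
    using Ssub by (simp add: prod.If_cases Int_absorb1)
  also have "\<dots> \<le> exp (- x) ^ card S"
  proof (rule power_mono)
    show "1 - x \<le> exp (- x)" using exp_ge_add_one_self[of "-x"] by simp
    show "0 \<le> 1 - x" using assms(2) unfolding x_def by (simp add: field_simps)
  qed
  also have "\<dots> = exp (- real (card S) * x)" by (simp add: exp_of_nat_mult[symmetric])
  also have "\<dots> = exp (- real (card (pigeons_mentioned T)) / (2 * log 2 (real n)))"
    using assms(1) unfolding S_def x_def by (simp add: log_nat_power)
  finally show ?thesis .
qed

end
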